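(* Let $(L,\le,(\sqsubseteq_\alpha)_{\alpha<\kappa})$ be a model of Axioms 1–4. Let $(x_\alpha)_{\alpha<\kappa}$ be a compatible sequence and let $x=\bigvee_{\alpha<\kappa}x_\alpha$. Then $x|_\alpha=x_\alpha$ for all $\alpha<\kappa$. Consequently, the following two maps are mutually inverse bijections between $L$ and the set of compatible sequences: - $x\mapsto(x|_\alpha)_{\alpha<\kappa}$; - $(x_\alpha)_{\alpha<\kappa}\mapsto\bigvee_{\alpha<\kappa}x_\alpha$.
   Context: Setting (model of Axioms 1–4). Let $(L,\le)$ be a complete lattice with join operation $\bigvee$ and least element $\perp$. Let $\kappa>0$ be an ordinal, and for each ordinal $\alpha<\kappa$ let $\sqsubseteq_\alpha$ be a preorder on $L$. Derived relation: $x=_\alpha y$ means $x\sqsubseteq_\alpha y$ and $y\sqsubseteq_\alpha x$. Derived sets, for $x\in L$ and $\alpha<\kappa$: - $(x]_\alpha=\{y\in L:\forall\beta<\alpha,\ x=_\beta y\}$. - $[x]_\alpha=\{y\in L: x=_\alpha y\}$. For a set $X$, $X\sqsubseteq_\alpha y$ means $x\sqsubseteq_\alpha y$ for all $x\in X$. The structure is a model of Axioms 1–4 if: - (A1) for all $\alpha<\beta<\kappa$, $x\sqsubseteq_\beta y$ implies $x=_\alpha y$; - (A2) $\bigcap_{\alpha<\kappa}=_\alpha$ is the identity relation on $L$; - (A3) for every $x\in L$, every $\alpha<\kappa$ and every $X\subseteq(x]_\alpha$ there is $y\in(x]_\alpha$ with $X\sqsubseteq_\alpha y$ such that for all $z\in(x]_\alpha$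 with $X\sqsubseteq_\alpha z$ we have $y\sqsubseteq_\alpha z$ and $y\le z$; - (A4) for every nonempty $X\subseteq L$, every $\alpha<\kappa$ and every $y\in L$, if $y=_\alpha x$ for all $x\in X$ then $y=_\alpha\bigvee X$. The element $y$ of (A3) is unique and is denoted $\bigsqcup_\alpha X$. The slice of $x$ at $\alpha$ is $x|_\alpha:=\bigsqcup_\alpha\{x\}$, where $\{x\}\subseteq(x]_\alpha$. A sequence $(x_\alpha)_{\alpha<\kappa}$ in $L$ is compatible if each $x_\alpha$ is the $\le$-least element of $[x_\alpha]_\alpha$ and $x_\alpha=_\alpha x_\beta$ for all $\alpha<\beta<\kappa$. *)

theory Defs
  imports Main
begin

text \<open>The ordinal kappa > 0 is represented by a (nonempty) well-ordered index type 'i: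
the ordinals alpha < kappa are the elements of 'i. The family of preorders
(sqsubseteq_alpha) is R :: 'i => 'a => 'a => bool, with L = 'a a complete lattice.\<close>

definition eqa :: "('i \<Rightarrow> 'a \<Rightarrow> 'a \<Rightarrow> bool) \<Rightarrow> 'i \<Rightarrow> 'a \<Rightarrow> 'a \<Rightarrow> bool" where
  "eqa R \<alpha> x y \<longleftrightarrow> R \<alpha> x y \<and> R \<alpha> y x"

definition lowerset :: "('i::wellorder \<Rightarrow> 'a \<Rightarrow> 'a \<Rightarrow> bool) \<Rightarrow> 'a \<Rightarrow> 'i \<Rightarrow> 'a set" where
  "lowerset R x \<alpha> = {y. \<forall>\<beta><\<alpha>. eqa R \<beta> x y}"

definition cls :: "('i \<Rightarrow> 'a \<Rightarrow> 'a \<Rightarrow> bool) \<Rightarrow> 'a \<Rightarrow> 'i \<Rightarrow> 'a set" where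
  "cls R x \<alpha> = {y. eqa R \<alpha> x y}"

definition set_below :: "('i \<Rightarrow> 'a \<Rightarrow> 'a \<Rightarrow> bool) \<Rightarrow> 'i \<Rightarrow> 'a set \<Rightarrow> 'a \<Rightarrow> bool" where
  "set_below R \<alpha> X y \<longleftrightarrow> (\<forall>x\<in>X. R \<alpha> x y)"

definition is_join :: "('i::wellorder \<Rightarrow> 'a::order \<Rightarrow> 'a \<Rightarrow> bool) \<Rightarrow> 'a \<Rightarrow> 'i \<Rightarrow> 'a set \<Rightarrow> 'a \<Rightarrow> bool" where
  "is_join R x \<alpha> X y \<longleftrightarrow> y \<in> lowerset R x \<alpha> \<and> set_below R \<alpha> X y \<and>
     (\<forall>z\<in>lowerset R x \<alpha>. set_below R \<alpha> X z \<longrightarrow> R \<alpha> y z \<and> y \<le> z)"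

definition model_axioms :: "('i::wellorder \<Rightarrow> 'a::complete_lattice \<Rightarrow> 'a \<Rightarrow> bool) \<Rightarrow> bool" where
  "model_axioms R \<longleftrightarrow>
     (\<forall>\<alpha>. reflp (R \<alpha>) \<and> transp (R \<alpha>)) \<and>
     (\<forall>\<alpha> \<beta> x y. \<alpha> < \<beta> \<longrightarrow> R \<beta> x y \<longrightarrow> eqa R \<alpha> x y) \<and>
     (\<forall>x y. (\<forall>\<alpha>. eqa R \<alpha> x y) \<longrightarrow> x = y) \<and>
     (\<forall>x \<alpha> X. X \<subseteq> lowerset R x \<alpha> \<longrightarrow> (\<exists>y. is_join R x \<alpha> X y)) \<and>
     (\<forall>X \<alpha> y. X \<noteq> {} \<longrightarrow> (\<forall>x\<in>X. eqa R \<alpha> y x) \<longrightarrow> eqa R \<alpha> y (Sup X))"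

definition join_at :: "('i::wellorder \<Rightarrow> 'a::order \<Rightarrow> 'a \<Rightarrow> bool) \<Rightarrow> 'a \<Rightarrow> 'i \<Rightarrow> 'a set \<Rightarrow> 'a" where
  "join_at R x \<alpha> X = (THE y. is_join R x \<alpha> X y)"

definition slice :: "('i::wellorder \<Rightarrow> 'a::order \<Rightarrow> 'a \<Rightarrow> bool) \<Rightarrow> 'a \<Rightarrow> 'i \<Rightarrow> 'a" where
  "slice R x \<alpha> = join_at R x \<alpha> {x}"

definition compatible :: "('i::wellorder \<Rightarrow> 'a::order \<Rightarrow> 'a \<Rightarrow> bool) \<Rightarrow> ('i \<Rightarrow> 'a) \<Rightarrow> bool" where
  "compatible R s \<longleftrightarrow>
     (\<forall>\<alpha>. s \<alpha> \<in> cls R (s \<alpha>) \<alpha> \<and> (\<forall>y\<in>cls R (s \<alpha>) \<alpha>. s \<alpha> \<le> y)) \<and>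
     (\<forall>\<alpha> \<beta>. \<alpha> < \<beta> \<longrightarrow> eqa R \<alpha> (s \<alpha>) (s \<beta>))"

end

theory Submission
  imports Defs
begin

lemma ax_refl: "model_axioms R \<Longrightarrow> R a x x"
proof -
  assume m: "model_axioms R"
  have "\<forall>\<alpha>. reflp (R \<alpha>) \<and> transp (R \<alpha>)" using m unfolding model_axioms_def by (rule conjunct1)
  then have "reflp (R a)" by (rule allE) (erule conjunct1)
  then show ?thesis by (rule reflpD)
qed
lemma ax_trans: "model_axioms R \<Longrightarrow> R a x y \<Longrightarrow> R a y z \<Longrightarrow> R a x z"
proof -
  assume m: "model_axioms R" and h: "R a x y" "R a y z"
  have "\<forall>\<alpha>. reflp (R \<alpha>) \<and> transp (R \<alpha>)" using m unfolding model_axioms_def by (rule conjunct1)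
  then have "transp (R a)" by (rule allE) (erule conjunct2)
  then show ?thesis using h by (rule transpD)
qed
lemma ax1: "model_axioms R \<Longrightarrow> a < b \<Longrightarrow> R b x y \<Longrightarrow> eqa R a x y"
proof -
  assume m: "model_axioms R" and h: "a < b" "R b x y"
  have "\<forall>\<alpha> \<beta> x y. \<alpha> < \<beta> \<longrightarrow> R \<beta> x y \<longrightarrow> eqa R \<alpha> x y"
    using m unfolding model_axioms_def by (elim conjE)
  then show ?thesis using h by blast
qed
lemma ax2: "model_axioms R \<Longrightarrow> (\<And>a. eqa R a x y) \<Longrightarrow> x = y"
proof -
  assume m: "model_axioms R" and h: "\<And>a. eqa R a x y"
  have "\<forall>x y. (\<forall>\<alpha>. eqa R \<alpha> x y) \<longrightarrow> x = y"
    using m unfolding model_axioms_def by (elim conjE)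
  then show ?thesis using h by blast
qed
lemma ax3: "model_axioms R \<Longrightarrow> X \<subseteq> lowerset R x a \<Longrightarrow> \<exists>y. is_join R x a X y"
proof -
  assume m: "model_axioms R" and h: "X \<subseteq> lowerset R x a"
  have "\<forall>x \<alpha> X. X \<subseteq> lowerset R x \<alpha> \<longrightarrow> (\<exists>y. is_join R x \<alpha> X y)"
    using m unfolding model_axioms_def by (elim conjE)
  then show ?thesis using h by blast
qed
lemma ax4: "model_axioms R \<Longrightarrow> X \<noteq> {} \<Longrightarrow> (\<And>x. x\<in>X \<Longrightarrow> eqa R a y x) \<Longrightarrow> eqa R a y (Sup X)"
proof -
  assume m: "model_axioms R" and h: "X \<noteq> {}" "\<And>x. x\<in>X \<Longrightarrow> eqa R a y x"
  have "\<forall>X \<alpha> y. X \<noteq> {} \<longrightarrow> (\<forall>x\<in>X. eqa R \<alpha> y x) \<longrightarrow> eqa R \<alpha> y (Sup X)"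
    using m unfolding model_axioms_def by (elim conjE)
  then show ?thesis using h by blast
qed

lemma eqa_refl: "model_axioms R \<Longrightarrow> eqa R a x x"
  by (simp add: eqa_def ax_refl)
lemma eqa_sym: "eqa R a x y \<Longrightarrow> eqa R a y x"
  by (simp add: eqa_def)
lemma eqa_trans: "model_axioms R \<Longrightarrow> eqa R a x y \<Longrightarrow> eqa R a y z \<Longrightarrow> eqa R a x z"
  unfolding eqa_def using ax_trans[of R a] by blast
lemma eqa_down: "model_axioms R \<Longrightarrow> a < b \<Longrightarrow> eqa R b x y \<Longrightarrow> eqa R a x y"
  unfolding eqa_def using ax1[of R a b] by (simp add: eqa_def)
lemma eqa_le: "model_axioms R \<Longrightarrow> a \<le> b \<Longrightarrow> eqa R b x y \<Longrightarrow> eqa R a x y"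
  using eqa_down[of R a b x y] by (cases "a = b") auto

lemma join_unique:
  fixes R :: "'i::wellorder \<Rightarrow> 'a::complete_lattice \<Rightarrow> 'a \<Rightarrow> bool"
  shows "is_join R x a X y \<Longrightarrow> is_join R x a X y' \<Longrightarrow> y = y'"
  unfolding is_join_def by (meson order_antisym)

lemma slice_join:
  fixes R :: "'i::wellorder \<Rightarrow> 'a::complete_lattice \<Rightarrow> 'a \<Rightarrow> bool"
  assumes m: "model_axioms R"
  shows "is_join R x a {x} (slice R x a)"
proof -
  have "{x} \<subseteq> lowerset R x a" using eqa_refl[OF m] by (auto simp: lowerset_def)
  then obtain y where y: "is_join R x a {x} y" using ax3[OF m] by blast
  show ?thesis unfolding slice_def join_at_def
    by (rule theI[of _ y]) (use y join_unique in blast)+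
qed

lemma slice_eqa:
  fixes R :: "'i::wellorder \<Rightarrow> 'a::complete_lattice \<Rightarrow> 'a \<Rightarrow> bool"
  assumes m: "model_axioms R"
  shows "eqa R a x (slice R x a)"
proof -
  have j: "is_join R x a {x} (slice R x a)" by (rule slice_join[OF m])
  have "x \<in> lowerset R x a" using eqa_refl[OF m] by (auto simp: lowerset_def)
  moreover have "set_below R a {x} x" by (simp add: set_below_def ax_refl[OF m])
  ultimately have "R a (slice R x a) x" using j unfolding is_join_def by blast
  moreover have "R a x (slice R x a)" using j unfolding is_join_def set_below_def by blast
  ultimately show ?thesis by (simp add: eqa_def)
qed

lemma slice_least:
  fixes R :: "'i::wellorder \<Rightarrow> 'a::complete_lattice \<Rightarrow> 'a \<Rightarrow> bool"
  assumes m: "model_axioms R" and e: "eqa R a x y"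
  shows "slice R x a \<le> y"
proof -
  have j: "is_join R x a {x} (slice R x a)" by (rule slice_join[OF m])
  have "y \<in> lowerset R x a" using eqa_down[OF m _ e] by (auto simp: lowerset_def)
  moreover have "set_below R a {x} y" using e by (simp add: set_below_def eqa_def)
  ultimately show ?thesis using j unfolding is_join_def by blast
qed

lemma compat_mono:
  fixes R :: "'i::wellorder \<Rightarrow> 'a::complete_lattice \<Rightarrow> 'a \<Rightarrow> bool"
  assumes m: "model_axioms R" and c: "compatible R s" and ab: "a \<le> b"
  shows "s a \<le> s b"
proof (cases "a = b")
  case False
  then have "a < b" using ab by simp
  then have "eqa R a (s a) (s b)" using c unfolding compatible_def by blast
  then show ?thesis using c unfolding compatible_def cls_def by blast
qed simp

lemma compat_sup:
  fixes R :: "'i::wellorder \<Rightarrow> 'a::complete_lattice \<Rightarrow> 'a \<Rightarrow> bool"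
  assumes m: "model_axioms R" and c: "compatible R s"
  shows "eqa R a (s a) (SUP b. s b)"
proof -
  have eq: "(SUP b. s b) = Sup (s ` {a..})"
  proof (rule order_antisym)
    show "(SUP b. s b) \<le> Sup (s ` {a..})"
    proof (rule SUP_least)
      fix b
      show "s b \<le> Sup (s ` {a..})"
      proof (cases "b \<le> a")
        case True
        then have "s b \<le> s a" by (rule compat_mono[OF m c])
        also have "s a \<le> Sup (s ` {a..})" by (rule Sup_upper) auto
        finally show ?thesis .
      next
        case False
        then show ?thesis by (intro Sup_upper) auto
      qed
    qed
  next
    show "Sup (s ` {a..}) \<le> (SUP b. s b)" by (rule Sup_subset_mono) auto
  qed
  have "eqa R a (s a) (Sup (s ` {a..}))"
  proof (rule ax4[OF m])
    show "s ` {a..} \<noteq> {}" by auto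
  next
    fix y assume "y \<in> s ` {a..}"
    then obtain b where b: "a \<le> b" "y = s b" by auto
    show "eqa R a (s a) y"
    proof (cases "a = b")
      case True then show ?thesis using b eqa_refl[OF m] by simp
    next
      case False then have "a < b" using b by simp
      then show ?thesis using c b unfolding compatible_def by blast
    qed
  qed
  then show ?thesis using eq by simp
qed

lemma slice_compat:
  fixes R :: "'i::wellorder \<Rightarrow> 'a::complete_lattice \<Rightarrow> 'a \<Rightarrow> bool"
  assumes m: "model_axioms R"
  shows "compatible R (\<lambda>a. slice R x a)"
  unfolding compatible_def
proof (intro conjI allI impI ballI)
  fix a
  show "slice R x a \<in> cls R (slice R x a) a" by (simp add: cls_def eqa_refl[OF m])
next
  fix a y assume "y \<in> cls R (slice R x a) a"
  then have "eqa R a (slice R x a) y" by (simp add: cls_def)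
  then have "eqa R a x y" by (rule eqa_trans[OF m slice_eqa[OF m]])
  then show "slice R x a \<le> y" by (rule slice_least[OF m])
next
  fix a b :: 'i assume ab: "a < b"
  have "eqa R a x (slice R x b)" using eqa_down[OF m ab slice_eqa[OF m]] .
  then show "eqa R a (slice R x a) (slice R x b)"
    by (rule eqa_trans[OF m eqa_sym[OF slice_eqa[OF m]]])
qed

lemma part1:
  fixes R :: "'i::wellorder \<Rightarrow> 'a::complete_lattice \<Rightarrow> 'a \<Rightarrow> bool"
  assumes m: "model_axioms R" and c: "compatible R s"
  shows "slice R (SUP b. s b) a = s a"
proof (rule order_antisym)
  have e: "eqa R a (s a) (SUP b. s b)" by (rule compat_sup[OF m c])
  show "slice R (SUP b. s b) a \<le> s a" by (rule slice_least[OF m eqa_sym[OF e]])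
  have "eqa R a (s a) (slice R (SUP b. s b) a)" by (rule eqa_trans[OF m e slice_eqa[OF m]])
  then show "s a \<le> slice R (SUP b. s b) a" using c unfolding compatible_def cls_def by blast
qed

lemma part3:
  fixes R :: "'i::wellorder \<Rightarrow> 'a::complete_lattice \<Rightarrow> 'a \<Rightarrow> bool"
  assumes m: "model_axioms R"
  shows "(SUP a. slice R x a) = x"
proof -
  have c: "compatible R (\<lambda>a. slice R x a)" by (rule slice_compat[OF m])
  show ?thesis
  proof (rule sym, rule ax2[OF m])
    fix a
    have "eqa R a (slice R x a) (SUP b. slice R x b)" using compat_sup[OF m c] by simp
    then show "eqa R a x (SUP b. slice R x b)" by (rule eqa_trans[OF m slice_eqa[OF m]])
  qed
qed

theorem mainTheorem10:
  fixes R :: "'i::wellorder \<Rightarrow> 'a::complete_lattice \<Rightarrow> 'a \<Rightarrow> bool"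
  assumes "model_axioms R"
  shows "(\<forall>s. compatible R s \<longrightarrow> (\<forall>\<alpha>. slice R (SUP \<beta>. s \<beta>) \<alpha> = s \<alpha>))
    \<and> (\<forall>x. compatible R (\<lambda>\<alpha>. slice R x \<alpha>))
    \<and> (\<forall>x. (SUP \<alpha>. slice R x \<alpha>) = x)
    \<and> (\<forall>s. compatible R s \<longrightarrow> (\<lambda>\<alpha>. slice R (SUP \<beta>. s \<beta>) \<alpha>) = s)
    \<and> bij_betw (\<lambda>x \<alpha>. slice R x \<alpha>) UNIV {s. compatible R s}"
proof -
  note m = assms
  have p4: "\<forall>s. compatible R s \<longrightarrow> (\<lambda>\<alpha>. slice R (SUP \<beta>. s \<beta>) \<alpha>) = s"
    using part1[OF m] by blast
  have "bij_betw (\<lambda>x \<alpha>. slice R x \<alpha>) UNIV {s. compatible R s}"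
  proof -
    have "inj (\<lambda>x \<alpha>. slice R x \<alpha>)"
    proof (rule injI)
      fix x y assume "(\<lambda>\<alpha>. slice R x \<alpha>) = (\<lambda>\<alpha>. slice R y \<alpha>)"
      then have "(SUP \<alpha>. slice R x \<alpha>) = (SUP \<alpha>. slice R y \<alpha>)" by simp
      then show "x = y" using part3[OF m, of x] part3[OF m, of y] by simp
    qed
    moreover have "range (\<lambda>x \<alpha>. slice R x \<alpha>) = {s. compatible R s}"
    proof
      show "range (\<lambda>x \<alpha>. slice R x \<alpha>) \<subseteq> {s. compatible R s}" using slice_compat[OF m] by auto
      show "{s. compatible R s} \<subseteq> range (\<lambda>x \<alpha>. slice R x \<alpha>)"
      proof
        fix s assume "s \<in> {s. compatible R s}"
        then have "s = (\<lambda>\<alpha>. slice R (SUP \<beta>. s \<beta>) \<alpha>)" using p4 by simp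
        then show "s \<in> range (\<lambda>x \<alpha>. slice R x \<alpha>)" by (rule image_eqI) simp
      qed
    qed
    ultimately show ?thesis by (simp add: bij_betw_def)
  qed
  then show ?thesis using part1[OF m] slice_compat[OF m] part3[OF m] p4 by simp
qed

end
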